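(* Let $\phi$ be a $C^\infty$ function on $\mathbb{R}$ supported in $[-1,1]$ with $\phi\ge0$ and $\int_{-1}^1\phi(t)\,dt=1$. For a function $f$ on $(0,\infty)$ and $\varepsilon>0$ define $f_\varepsilon(x):=\int_{-1}^1\phi(t)f(xe^{-\varepsilon t})\,dt$ for $x\in(0,\infty)$. If $f\in\mathcal{F}_\mathrm{convex}^\nearrow(0,\infty)$, then $f_\varepsilon\in\mathcal{F}_\mathrm{convex}^\nearrow(0,\infty)$ for every $\varepsilon>0$ and $\hat f_\varepsilon\to\hat f$ as $\varepsilon\searrow0$ uniformly on every bounded closed interval of $(0,\infty)$. If $f\in\mathcal{F}_\mathrm{concave}^\nearrow(0,\infty)$, then $f_\varepsilon\in\mathcal{F}_\mathrm{concave}^\nearrow(0,\infty)$ for every $\varepsilon>0$ and $\check f_\varepsilon\to\check f$ as $\varepsilon\searrow0$ uniformly on every bounded closed interval of $(0,\infty)$.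
   Context: $\mathcal{F}_\mathrm{convex}^\nearrow(0,\infty)$ is the set of non-decreasing convex real functions $f$ on $(0,\infty)$ with $\lim_{x\to\infty}f(x)/x=+\infty$; for such $f$, $\hat f(t):=\sup_{x>0}\{xt-f(x)\}$, $t>0$. $\mathcal{F}_\mathrm{concave}^\nearrow(0,\infty)$ is the set of non-decreasing concave real functions $f$ on $(0,\infty)$ with $\lim_{x\to\infty}f(x)/x=0$; for such $f$, $\check f(t):=\inf_{x>0}\{xt-f(x)\}$, $t>0$. *)

theory Defs
  imports "HOL-Analysis.Analysis"
begin

definition smooth_real :: "(real \<Rightarrow> real) \<Rightarrow> bool" where
  "smooth_real g \<longleftrightarrow> (\<forall>n x. (deriv ^^ n) g differentiable (at x))"

definition F_convex_inc :: "(real \<Rightarrow> real) \<Rightarrow> bool" where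
  "F_convex_inc f \<longleftrightarrow> mono_on {0<..} f \<and> convex_on {0<..} f \<and>
     filterlim (\<lambda>x. f x / x) at_top at_top"

definition F_concave_inc :: "(real \<Rightarrow> real) \<Rightarrow> bool" where
  "F_concave_inc f \<longleftrightarrow> mono_on {0<..} f \<and> concave_on {0<..} f \<and>
     ((\<lambda>x. f x / x) \<longlongrightarrow> 0) at_top"

definition conj_hat :: "(real \<Rightarrow> real) \<Rightarrow> real \<Rightarrow> real" where
  "conj_hat f t = (SUP x\<in>{0<..}. x * t - f x)"

definition conj_check :: "(real \<Rightarrow> real) \<Rightarrow> real \<Rightarrow> real" where
  "conj_check f t = (INF x\<in>{0<..}. x * t - f x)"

definition regularize :: "(real \<Rightarrow> real) \<Rightarrow> real \<Rightarrow> (real \<Rightarrow> real) \<Rightarrow> real \<Rightarrow> real" where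
  "regularize \<phi> \<epsilon> f x = integral {-1..1} (\<lambda>t. \<phi> t * f (x * exp (- \<epsilon> * t)))"

end

theory Submission
  imports Defs
begin

lemma phi_cont: assumes "smooth_real \<phi>" shows "continuous_on UNIV \<phi>"
proof -
  have "\<And>x. \<phi> differentiable (at x)" using assms unfolding smooth_real_def
    by (metis funpow_0)
  then show ?thesis by (simp add: continuous_at_imp_continuous_on differentiable_imp_continuous_within)
qed

lemma reg_integrable:
  fixes \<phi> f :: "real \<Rightarrow> real" and x e :: real
  assumes phic: "continuous_on UNIV \<phi>" and fc: "continuous_on {0<..} f" and x: "x > 0"
  shows "(\<lambda>t. \<phi> t * f (x * exp (- e * t))) integrable_on {-1..1}"
proof -
  have "continuous_on {-1..1} (\<lambda>t. f (x * exp (- e * t)))"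
  proof (rule continuous_on_compose2[OF fc])
    show "continuous_on {-1..1} (\<lambda>t. x * exp (- e * t))" by (intro continuous_intros)
  qed (use x in auto)
  then have "continuous_on {-1..1} (\<lambda>t. \<phi> t * f (x * exp (- e * t)))"
    using phic by (auto intro!: continuous_intros elim: continuous_on_subset)
  then show ?thesis by (rule integrable_continuous_interval)
qed

lemma reg_bounds:
  fixes \<phi> f :: "real \<Rightarrow> real" and x e :: real
  assumes phic: "continuous_on UNIV \<phi>" and nonneg: "\<And>t. \<phi> t \<ge> 0"
    and int1: "integral {-1..1} \<phi> = 1"
    and fc: "continuous_on {0<..} f" and fm: "mono_on {0<..} f" and x: "x > 0" and e: "e \<ge> 0"
  shows "f (x * exp (-e)) \<le> regularize \<phi> e f x" "regularize \<phi> e f x \<le> f (x * exp e)"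
proof -
  have phii: "\<phi> integrable_on {-1..1}"
    using phic by (auto intro!: integrable_continuous_interval elim: continuous_on_subset)
  have I: "(\<lambda>t. \<phi> t * f (x * exp (- e * t))) integrable_on {-1..1}"
    by (rule reg_integrable[OF phic fc x])
  have "f (x * exp (-e)) = integral {-1..1} (\<lambda>t. \<phi> t * f (x * exp (-e)))"
    using int1 by (simp add: integral_mult_left)
  also have "\<dots> \<le> regularize \<phi> e f x" unfolding regularize_def
  proof (rule integral_le)
    show "(\<lambda>t. \<phi> t * f (x * exp (- e))) integrable_on {-1..1}"
      using integrable_on_mult_left[OF phii, of "f (x * exp (- e))"] by (simp add: mult.commute)
    show "(\<lambda>t. \<phi> t * f (x * exp (- e * t))) integrable_on {-1..1}" by (rule I)
    fix t :: real assume t: "t \<in> {-1..1}"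
    have "- e \<le> - e * t" using mult_left_le[of t e] t e by auto
    then have "f (x * exp (- e)) \<le> f (x * exp (- e * t))"
      using x by (intro mono_onD[OF fm]) auto
    then show "\<phi> t * f (x * exp (- e)) \<le> \<phi> t * f (x * exp (- e * t))"
      using nonneg by (simp add: mult_left_mono)
  qed
  finally show "f (x * exp (-e)) \<le> regularize \<phi> e f x" .
  have "regularize \<phi> e f x \<le> integral {-1..1} (\<lambda>t. \<phi> t * f (x * exp e))" unfolding regularize_def
  proof (rule integral_le)
    show "(\<lambda>t. \<phi> t * f (x * exp e)) integrable_on {-1..1}"
      using integrable_on_mult_left[OF phii, of "f (x * exp e)"] by (simp add: mult.commute)
    show "(\<lambda>t. \<phi> t * f (x * exp (- e * t))) integrable_on {-1..1}" by (rule I)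
    fix t :: real assume t: "t \<in> {-1..1}"
    have "- e * t \<le> e" using mult_left_le[of "-t" e] t e by auto
    then have "f (x * exp (- e * t)) \<le> f (x * exp e)"
      using x by (intro mono_onD[OF fm]) auto
    then show "\<phi> t * f (x * exp (- e * t)) \<le> \<phi> t * f (x * exp e)"
      using nonneg by (simp add: mult_left_mono)
  qed
  also have "\<dots> = f (x * exp e)"
    using int1 by (simp add: integral_mult_left)
  finally show "regularize \<phi> e f x \<le> f (x * exp e)" .
qed

lemma reg_mono:
  fixes \<phi> f :: "real \<Rightarrow> real"
  assumes phic: "continuous_on UNIV \<phi>" and nonneg: "\<And>t. \<phi> t \<ge> 0"
    and fc: "continuous_on {0<..} f" and fm: "mono_on {0<..} f"
  shows "mono_on {0<..} (regularize \<phi> e f)"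
proof (rule mono_onI)
  fix x y :: real assume x: "x \<in> {0<..}" and y: "y \<in> {0<..}" and xy: "x \<le> y"
  show "regularize \<phi> e f x \<le> regularize \<phi> e f y" unfolding regularize_def
  proof (rule integral_le)
    show "(\<lambda>t. \<phi> t * f (x * exp (- e * t))) integrable_on {-1..1}"
      using reg_integrable[OF phic fc] x by auto
    show "(\<lambda>t. \<phi> t * f (y * exp (- e * t))) integrable_on {-1..1}"
      using reg_integrable[OF phic fc] y by auto
    fix t :: real
    have "f (x * exp (- e * t)) \<le> f (y * exp (- e * t))"
      using x y xy by (intro mono_onD[OF fm]) auto
    then show "\<phi> t * f (x * exp (- e * t)) \<le> \<phi> t * f (y * exp (- e * t))"
      using nonneg by (simp add: mult_left_mono)
  qed
qed

lemma reg_convex: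
  fixes \<phi> f :: "real \<Rightarrow> real"
  assumes phic: "continuous_on UNIV \<phi>" and nonneg: "\<And>t. \<phi> t \<ge> 0"
    and fc: "continuous_on {0<..} f" and fcv: "convex_on {0<..} f"
  shows "convex_on {0<..} (regularize \<phi> e f)"
proof (rule convex_onI)
  show "convex {0::real<..}" by simp
  fix u x y :: real assume u: "0 < u" "u < 1" and x: "x \<in> {0<..}" and y: "y \<in> {0<..}"
  have Ix: "(\<lambda>t. \<phi> t * f (x * exp (- e * t))) integrable_on {-1..1}"
    using reg_integrable[OF phic fc] x by auto
  have Iy: "(\<lambda>t. \<phi> t * f (y * exp (- e * t))) integrable_on {-1..1}"
    using reg_integrable[OF phic fc] y by auto
  have z: "(1 - u) * x + u * y > 0" using u x y by (simp add: add_pos_pos)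
  have "regularize \<phi> e f ((1 - u) *\<^sub>R x + u *\<^sub>R y) \<le>
      integral {-1..1} (\<lambda>t. (1 - u) * (\<phi> t * f (x * exp (- e * t))) + u * (\<phi> t * f (y * exp (- e * t))))"
    unfolding regularize_def scaleR_conv_of_real of_real_def[symmetric] of_real_eq_id id_def
  proof (rule integral_le)
    show "(\<lambda>t. \<phi> t * f (((1 - u) * x + u * y) * exp (- e * t))) integrable_on {-1..1}"
      using reg_integrable[OF phic fc z] by auto
    show "(\<lambda>t. (1 - u) * (\<phi> t * f (x * exp (- e * t))) + u * (\<phi> t * f (y * exp (- e * t)))) integrable_on {-1..1}"
      using Ix Iy by (intro integrable_add integrable_on_mult_right) auto
    fix t :: real
    have "f ((1 - u) *\<^sub>R (x * exp (- e * t)) + u *\<^sub>R (y * exp (- e * t))) \<le> (1 - u) * f (x * exp (- e * t)) + u * f (y * exp (- e * t))"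
      using u x y by (intro convex_onD[OF fcv]) auto
    then have "f (((1 - u) * x + u * y) * exp (- e * t)) \<le> (1 - u) * f (x * exp (- e * t)) + u * f (y * exp (- e * t))"
      by (simp add: algebra_simps)
    then show "\<phi> t * f (((1 - u) * x + u * y) * exp (- e * t)) \<le> (1 - u) * (\<phi> t * f (x * exp (- e * t))) + u * (\<phi> t * f (y * exp (- e * t)))"
      using nonneg[of t] mult_left_mono by (fastforce simp: algebra_simps)
  qed
  also have "\<dots> = (1 - u) * regularize \<phi> e f x + u * regularize \<phi> e f y"
    unfolding regularize_def
    using Ix Iy by (subst integral_add) (auto intro: integrable_on_mult_right)
  finally show "regularize \<phi> e f ((1 - u) *\<^sub>R x + u *\<^sub>R y) \<le> (1 - u) * regularize \<phi> e f x + u * regularize \<phi> e f y" .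
qed

lemma scale_at_top: "(c::real) > 0 \<Longrightarrow> filterlim (\<lambda>x. x * c) at_top at_top"
  by (rule filterlim_at_top_mult_tendsto_pos[OF tendsto_const _ filterlim_ident])

lemma growth_lower:
  fixes f g :: "real \<Rightarrow> real"
  assumes lim: "filterlim (\<lambda>x. f x / x) at_top at_top" and c: "c > 0"
    and le: "\<And>x. x > 0 \<Longrightarrow> f (x * c) \<le> g x"
  shows "filterlim (\<lambda>x. g x / x) at_top at_top"
proof -
  have "filterlim (\<lambda>x. f (x * c) / (x * c)) at_top at_top"
    by (rule filterlim_compose[OF lim scale_at_top[OF c]])
  then have "filterlim (\<lambda>x. c * (f (x * c) / (x * c))) at_top at_top"
    by (rule filterlim_tendsto_pos_mult_at_top[OF tendsto_const c])
  moreover have "\<forall>\<^sub>F x in at_top. c * (f (x * c) / (x * c)) \<le> g x / x"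
    using eventually_gt_at_top[of 0]
  proof eventually_elim
    case (elim x)
    have "c * (f (x * c) / (x * c)) = f (x * c) / x" using c elim by (simp add: field_simps)
    also have "\<dots> \<le> g x / x" using le[OF elim] elim by (simp add: divide_right_mono)
    finally show ?case .
  qed
  ultimately show ?thesis by (rule filterlim_at_top_mono)
qed

lemma growth_zero:
  fixes f g :: "real \<Rightarrow> real"
  assumes lim: "((\<lambda>x. f x / x) \<longlongrightarrow> 0) at_top" and c: "c > 0" and d: "d > 0"
    and le1: "\<And>x. x > 0 \<Longrightarrow> f (x * c) \<le> g x" and le2: "\<And>x. x > 0 \<Longrightarrow> g x \<le> f (x * d)"
  shows "((\<lambda>x. g x / x) \<longlongrightarrow> 0) at_top"
proof -
  have A0: "((\<lambda>x. c * (f (x * c) / (x * c))) \<longlongrightarrow> c * 0) at_top"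
    by (intro tendsto_mult tendsto_const filterlim_compose[OF lim scale_at_top[OF c]])
  have B0: "((\<lambda>x. d * (f (x * d) / (x * d))) \<longlongrightarrow> d * 0) at_top"
    by (intro tendsto_mult tendsto_const filterlim_compose[OF lim scale_at_top[OF d]])
  have A: "((\<lambda>x. c * (f (x * c) / (x * c))) \<longlongrightarrow> 0) at_top" using A0 by simp
  have B: "((\<lambda>x. d * (f (x * d) / (x * d))) \<longlongrightarrow> 0) at_top" using B0 by simp
  show ?thesis
  proof (rule tendsto_sandwich[OF _ _ A B])
    show "\<forall>\<^sub>F x in at_top. c * (f (x * c) / (x * c)) \<le> g x / x"
      using eventually_gt_at_top[of 0]
    proof eventually_elim
      case (elim x)
      have "c * (f (x * c) / (x * c)) = f (x * c) / x" using c elim by (simp add: field_simps)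
      also have "\<dots> \<le> g x / x" using le1[OF elim] elim by (simp add: divide_right_mono)
      finally show ?case .
    qed
    show "\<forall>\<^sub>F x in at_top. g x / x \<le> d * (f (x * d) / (x * d))"
      using eventually_gt_at_top[of 0]
    proof eventually_elim
      case (elim x)
      have "d * (f (x * d) / (x * d)) = f (x * d) / x" using d elim by (simp add: field_simps)
      moreover have "g x / x \<le> f (x * d) / x" using le2[OF elim] elim by (simp add: divide_right_mono)
      ultimately show ?case by simp
    qed
  qed
qed

lemma reg_neg:
  fixes \<phi> f :: "real \<Rightarrow> real"
  shows "regularize \<phi> e (\<lambda>x. - f x) = (\<lambda>x. - regularize \<phi> e f x)"
proof
  fix x
  have "(\<lambda>t. \<phi> t * - f (x * exp (- e * t))) = (\<lambda>t. - (\<phi> t * f (x * exp (- e * t))))"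
    by simp
  then show "regularize \<phi> e (\<lambda>x. - f x) x = - regularize \<phi> e f x"
    unfolding regularize_def by (simp only: integral_neg)
qed

lemma reg_F_convex:
  fixes \<phi> f :: "real \<Rightarrow> real"
  assumes phic: "continuous_on UNIV \<phi>" and nonneg: "\<And>t. \<phi> t \<ge> 0"
    and int1: "integral {-1..1} \<phi> = 1" and F: "F_convex_inc f" and e: "e > 0"
  shows "F_convex_inc (regularize \<phi> e f)"
proof -
  have fm: "mono_on {0<..} f" and fcv: "convex_on {0<..} f" and lim: "filterlim (\<lambda>x. f x / x) at_top at_top"
    using F unfolding F_convex_inc_def by blast+
  have fc: "continuous_on {0<..} f" by (rule convex_on_continuous[OF open_greaterThan fcv])
  show ?thesis unfolding F_convex_inc_def
  proof (intro conjI)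
    show "mono_on {0<..} (regularize \<phi> e f)" by (rule reg_mono[OF phic nonneg fc fm])
    show "convex_on {0<..} (regularize \<phi> e f)" by (rule reg_convex[OF phic nonneg fc fcv])
    show "filterlim (\<lambda>x. regularize \<phi> e f x / x) at_top at_top"
      by (rule growth_lower[OF lim exp_gt_zero], rule reg_bounds(1)[OF phic nonneg int1 fc fm _ less_imp_le[OF e]])
  qed
qed

lemma reg_F_concave:
  fixes \<phi> f :: "real \<Rightarrow> real"
  assumes phic: "continuous_on UNIV \<phi>" and nonneg: "\<And>t. \<phi> t \<ge> 0"
    and int1: "integral {-1..1} \<phi> = 1" and F: "F_concave_inc f" and e: "e > 0"
  shows "F_concave_inc (regularize \<phi> e f)"
proof -
  have fm: "mono_on {0<..} f" and fcv: "concave_on {0<..} f" and lim: "((\<lambda>x. f x / x) \<longlongrightarrow> 0) at_top"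
    using F unfolding F_concave_inc_def by blast+
  have ncv: "convex_on {0<..} (\<lambda>x. - f x)" using fcv unfolding concave_on_def .
  have nc: "continuous_on {0<..} (\<lambda>x. - f x)"
    by (rule convex_on_continuous[OF open_greaterThan ncv])
  have fc: "continuous_on {0<..} f" using continuous_on_minus[OF nc] by (simp only: minus_minus)
  have fc': "continuous_on {0<..} (\<lambda>x. - f x)" by fact
  have L: "\<And>x. 0 < x \<Longrightarrow> f (x * exp (- e)) \<le> regularize \<phi> e f x"
    by (rule reg_bounds(1)[OF phic nonneg int1 fc fm _ less_imp_le[OF e]])
  have U: "\<And>x. 0 < x \<Longrightarrow> regularize \<phi> e f x \<le> f (x * exp e)"
    by (rule reg_bounds(2)[OF phic nonneg int1 fc fm _ less_imp_le[OF e]])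
  show ?thesis unfolding F_concave_inc_def
  proof (intro conjI)
    show "mono_on {0<..} (regularize \<phi> e f)" by (rule reg_mono[OF phic nonneg fc fm])
    have "convex_on {0<..} (regularize \<phi> e (\<lambda>x. - f x))"
      by (rule reg_convex[OF phic nonneg fc' ncv])
    then show "concave_on {0<..} (regularize \<phi> e f)" unfolding concave_on_def reg_neg[of \<phi> e f] .
    show "((\<lambda>x. regularize \<phi> e f x / x) \<longlongrightarrow> 0) at_top"
      using growth_zero[OF lim exp_gt_zero exp_gt_zero L U] .
  qed
qed

lemma convex_lower_bound:
  fixes f :: "real \<Rightarrow> real"
  assumes F: "F_convex_inc f" and x: "x > 0"
  shows "2 * f 1 - f 2 \<le> f x"
proof -
  have fm: "mono_on {0<..} f" and fcv: "convex_on {0<..} f"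
    using F unfolding F_convex_inc_def by blast+
  have f12: "f 1 \<le> f 2" by (rule mono_onD[OF fm]) auto
  show ?thesis
  proof (cases "x \<ge> 1")
    case True
    then have "f 1 \<le> f x" by (intro mono_onD[OF fm]) auto
    then show ?thesis using f12 by simp
  next
    case False
    define u where "u = 1 / (2 - x)"
    have u: "0 < u" "u \<le> 1" using False x by (auto simp: u_def field_simps)
    have d: "2 - x > 0" using False by simp
    have ux: "u * (2 - x) = 1" using d by (simp add: u_def)
    have "f ((1 - u) *\<^sub>R 2 + u *\<^sub>R x) \<le> (1 - u) * f 2 + u * f x"
      using u x by (intro convex_onD[OF fcv]) auto
    moreover have "(1 - u) *\<^sub>R 2 + u *\<^sub>R x = (1::real)"
    proof -
      have "(1 - u) * 2 + u * x = 2 - u * (2 - x)" by (simp add: algebra_simps)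
      then show ?thesis using ux by simp
    qed
    ultimately have A: "f 1 \<le> (1 - u) * f 2 + u * f x" by metis
    have "(2 - x) * f 1 \<le> (2 - x) * ((1 - u) * f 2 + u * f x)"
      using A False by (intro mult_left_mono) auto
    also have "\<dots> = ((2 - x) - u * (2 - x)) * f 2 + (u * (2 - x)) * f x"
      by (simp add: algebra_simps)
    also have "\<dots> = (1 - x) * f 2 + f x" using ux by simp
    finally have B: "(2 - x) * f 1 \<le> (1 - x) * f 2 + f x" .
    have C: "(f 2 - f 1) * (1 - x) \<le> f 2 - f 1"
      using mult_left_le[of "1 - x" "f 2 - f 1"] f12 x by simp
    have B': "2 * f 1 - f 2 + ((f 2 - f 1) - (f 2 - f 1) * (1 - x)) \<le> f x"
      using B by (simp add: algebra_simps)
    show ?thesis using B' C by linarith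
  qed
qed

lemma hat_bdd:
  fixes f :: "real \<Rightarrow> real"
  assumes F: "F_convex_inc f" and t: "t > 0"
  shows "bdd_above ((\<lambda>x. x * t - f x) ` {0<..})"
proof -
  have lim: "filterlim (\<lambda>x. f x / x) at_top at_top" using F unfolding F_convex_inc_def by blast
  then have "eventually (\<lambda>x. t \<le> f x / x) at_top" by (simp add: filterlim_at_top)
  then obtain N where N: "\<And>x. x \<ge> N \<Longrightarrow> t \<le> f x / x" by (auto simp: eventually_at_top_linorder)
  define X where "X = max N 1"
  show ?thesis
  proof (rule bdd_aboveI[where M="max 0 (X * t - (2 * f 1 - f 2))"])
    fix y assume "y \<in> (\<lambda>x. x * t - f x) ` {0<..}"
    then obtain x where x: "x > 0" and y: "y = x * t - f x" by auto
    show "y \<le> max 0 (X * t - (2 * f 1 - f 2))"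
    proof (cases "x \<ge> X")
      case True
      then have "t \<le> f x / x" using N by (simp add: X_def)
      then have "x * t \<le> f x" using x by (simp add: field_simps)
      then show ?thesis using y by simp
    next
      case False
      have "x * t \<le> X * t" using False t by simp
      moreover have "2 * f 1 - f 2 \<le> f x" by (rule convex_lower_bound[OF F x])
      ultimately show ?thesis using y by simp
    qed
  qed
qed

lemma check_bdd:
  fixes f :: "real \<Rightarrow> real"
  assumes F: "F_concave_inc f" and t: "t > 0"
  shows "bdd_below ((\<lambda>x. x * t - f x) ` {0<..})"
proof -
  have fm: "mono_on {0<..} f" and lim: "((\<lambda>x. f x / x) \<longlongrightarrow> 0) at_top"
    using F unfolding F_concave_inc_def by blast+
  have "eventually (\<lambda>x. f x / x < t) at_top" using order_tendstoD(2)[OF lim t] .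
  then obtain N where N: "\<And>x. x \<ge> N \<Longrightarrow> f x / x < t" by (auto simp: eventually_at_top_linorder)
  define X where "X = max N 1"
  show ?thesis
  proof (rule bdd_belowI[where m="min 0 (- f X)"])
    fix y assume "y \<in> (\<lambda>x. x * t - f x) ` {0<..}"
    then obtain x where x: "x > 0" and y: "y = x * t - f x" by auto
    show "min 0 (- f X) \<le> y"
    proof (cases "x \<ge> X")
      case True
      then have "f x / x < t" using N by (simp add: X_def)
      then have "f x < x * t" using x by (simp add: field_simps)
      then show ?thesis using y by simp
    next
      case False
      have "f x \<le> f X" using False x by (intro mono_onD[OF fm]) (auto simp: X_def)
      moreover have "0 \<le> x * t" using x t by simp
      ultimately show ?thesis using y by simp
    qed
  qed
qed

lemma hat_convex:
  fixes f :: "real \<Rightarrow> real"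
  assumes bdd: "\<And>t. t > 0 \<Longrightarrow> bdd_above ((\<lambda>x. x * t - f x) ` {0<..})"
  shows "convex_on {0<..} (conj_hat f)"
proof (rule convex_onI)
  show "convex {0::real<..}" by simp
  fix u a b :: real assume u: "0 < u" "u < 1" and a: "a \<in> {0<..}" and b: "b \<in> {0<..}"
  show "conj_hat f ((1 - u) *\<^sub>R a + u *\<^sub>R b) \<le> (1 - u) * conj_hat f a + u * conj_hat f b"
    unfolding conj_hat_def
  proof (rule cSUP_least)
    show "{0::real<..} \<noteq> {}" by auto
    fix x :: real assume x: "x \<in> {0<..}"
    have "x * ((1 - u) *\<^sub>R a + u *\<^sub>R b) - f x = (1 - u) * (x * a - f x) + u * (x * b - f x)"
      by (simp add: algebra_simps)
    also have "\<dots> \<le> (1 - u) * (SUP x\<in>{0<..}. x * a - f x) + u * (SUP x\<in>{0<..}. x * b - f x)"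
      using u a b x by (intro add_mono mult_left_mono cSUP_upper bdd) auto
    finally show "x * ((1 - u) *\<^sub>R a + u *\<^sub>R b) - f x \<le> (1 - u) * (SUP x\<in>{0<..}. x * a - f x) + u * (SUP x\<in>{0<..}. x * b - f x)" .
  qed
qed

lemma check_concave:
  fixes f :: "real \<Rightarrow> real"
  assumes bdd: "\<And>t. t > 0 \<Longrightarrow> bdd_below ((\<lambda>x. x * t - f x) ` {0<..})"
  shows "convex_on {0<..} (\<lambda>t. - conj_check f t)"
proof (rule convex_onI)
  show "convex {0::real<..}" by simp
  fix u a b :: real assume u: "0 < u" "u < 1" and a: "a \<in> {0<..}" and b: "b \<in> {0<..}"
  have "(1 - u) * conj_check f a + u * conj_check f b \<le> conj_check f ((1 - u) *\<^sub>R a + u *\<^sub>R b)"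
    unfolding conj_check_def
  proof (rule cINF_greatest)
    show "{0::real<..} \<noteq> {}" by auto
    fix x :: real assume x: "x \<in> {0<..}"
    have "(1 - u) * (INF x\<in>{0<..}. x * a - f x) + u * (INF x\<in>{0<..}. x * b - f x) \<le> (1 - u) * (x * a - f x) + u * (x * b - f x)"
      using u a b x by (intro add_mono mult_left_mono cINF_lower bdd) auto
    also have "\<dots> = x * ((1 - u) *\<^sub>R a + u *\<^sub>R b) - f x"
      by (simp add: algebra_simps)
    finally show "(1 - u) * (INF x\<in>{0<..}. x * a - f x) + u * (INF x\<in>{0<..}. x * b - f x) \<le> x * ((1 - u) *\<^sub>R a + u *\<^sub>R b) - f x" .
  qed
  then show "- conj_check f ((1 - u) *\<^sub>R a + u *\<^sub>R b) \<le> (1 - u) * - conj_check f a + u * - conj_check f b"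
    by simp
qed

lemma hat_sandwich:
  fixes f g :: "real \<Rightarrow> real"
  assumes bdd: "\<And>t. t > 0 \<Longrightarrow> bdd_above ((\<lambda>x. x * t - f x) ` {0<..})"
    and lo: "\<And>x. x > 0 \<Longrightarrow> f (x * exp (- e)) \<le> g x"
    and hi: "\<And>x. x > 0 \<Longrightarrow> g x \<le> f (x * exp e)"
    and t: "t > 0"
  shows "conj_hat f (t * exp (- e)) \<le> conj_hat g t \<and> conj_hat g t \<le> conj_hat f (t * exp e)"
proof -
  have up: "x * t - g x \<le> conj_hat f (t * exp e)" if x: "x > 0" for x
  proof -
    have "x * t - g x \<le> x * t - f (x * exp (- e))" using lo[OF x] by simp
    also have "\<dots> = (x * exp (- e)) * (t * exp e) - f (x * exp (- e))"
      by (simp add: exp_minus field_simps)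
    also have "\<dots> \<le> conj_hat f (t * exp e)" unfolding conj_hat_def
      using x t by (intro cSUP_upper[of "x * exp (- e)" "{0<..}" "\<lambda>y. y * (t * exp e) - f y"] bdd) auto
    finally show ?thesis .
  qed
  have bddg: "bdd_above ((\<lambda>x. x * t - g x) ` {0<..})"
    by (rule bdd_aboveI2[where M="conj_hat f (t * exp e)"]) (use up in auto)
  have "conj_hat g t \<le> conj_hat f (t * exp e)" unfolding conj_hat_def[of g]
    by (rule cSUP_least) (use up in auto)
  moreover have "conj_hat f (t * exp (- e)) \<le> conj_hat g t" unfolding conj_hat_def[of f]
  proof (rule cSUP_least)
    show "{0::real<..} \<noteq> {}" by auto
    fix y :: real assume y: "y \<in> {0<..}"
    define x where "x = y * exp (- e)"
    have x: "x > 0" using y by (simp add: x_def)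
    have xy: "x * exp e = y" by (simp add: x_def exp_minus field_simps)
    have "y * (t * exp (- e)) - f y = x * t - f y" by (simp add: x_def algebra_simps)
    also have "\<dots> \<le> x * t - g x" using hi[OF x] xy by simp
    also have "\<dots> \<le> conj_hat g t" unfolding conj_hat_def
      using x by (intro cSUP_upper bddg) auto
    finally show "y * (t * exp (- e)) - f y \<le> conj_hat g t" .
  qed
  ultimately show ?thesis by simp
qed

lemma check_sandwich:
  fixes f g :: "real \<Rightarrow> real"
  assumes bdd: "\<And>t. t > 0 \<Longrightarrow> bdd_below ((\<lambda>x. x * t - f x) ` {0<..})"
    and lo: "\<And>x. x > 0 \<Longrightarrow> f (x * exp (- e)) \<le> g x"
    and hi: "\<And>x. x > 0 \<Longrightarrow> g x \<le> f (x * exp e)"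
    and t: "t > 0"
  shows "conj_check f (t * exp (- e)) \<le> conj_check g t \<and> conj_check g t \<le> conj_check f (t * exp e)"
proof -
  have down: "conj_check f (t * exp (- e)) \<le> x * t - g x" if x: "x > 0" for x
  proof -
    have "conj_check f (t * exp (- e)) \<le> (x * exp e) * (t * exp (- e)) - f (x * exp e)" unfolding conj_check_def
      using x t by (intro cINF_lower[where x="x * exp e" and A="{0<..}" and f="\<lambda>y. y * (t * exp (- e)) - f y"] bdd) auto
    also have "\<dots> = x * t - f (x * exp e)"
      by (simp add: exp_minus field_simps)
    also have "\<dots> \<le> x * t - g x" using hi[OF x] by simp
    finally show ?thesis .
  qed
  have bddg: "bdd_below ((\<lambda>x. x * t - g x) ` {0<..})"
    by (rule bdd_belowI2[where m="conj_check f (t * exp (- e))"]) (use down in auto)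
  have "conj_check f (t * exp (- e)) \<le> conj_check g t" unfolding conj_check_def[of g]
    by (rule cINF_greatest) (use down in auto)
  moreover have "conj_check g t \<le> conj_check f (t * exp e)" unfolding conj_check_def[of f]
  proof (rule cINF_greatest)
    show "{0::real<..} \<noteq> {}" by auto
    fix y :: real assume y: "y \<in> {0<..}"
    define x where "x = y * exp e"
    have x: "x > 0" using y by (simp add: x_def)
    have xy: "x * exp (- e) = y" by (simp add: x_def exp_minus field_simps)
    have "conj_check g t \<le> x * t - g x" unfolding conj_check_def
      using x by (intro cINF_lower bddg) auto
    also have "\<dots> \<le> x * t - f y" using lo[OF x] xy by simp
    also have "\<dots> = y * (t * exp e) - f y" by (simp add: x_def algebra_simps)
    finally show "conj_check g t \<le> y * (t * exp e) - f y" .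
  qed
  ultimately show ?thesis by simp
qed

lemma unif_sandwich:
  fixes h :: "real \<Rightarrow> real" and G :: "real \<Rightarrow> real \<Rightarrow> real"
  assumes hc: "continuous_on {0<..} h"
    and sw: "\<And>e t. e > 0 \<Longrightarrow> t > 0 \<Longrightarrow> h (t * exp (- e)) \<le> G e t \<and> G e t \<le> h (t * exp e)"
    and a: "0 < a" and ab: "a \<le> b"
  shows "uniform_limit {a..b} G h (at_right 0)"
  unfolding uniform_limit_iff
proof (intro allI impI)
  fix \<eta> :: real assume eta: "\<eta> > 0"
  define K where "K = {a * exp (- 1) .. b * exp 1}"
  have KS: "K \<subseteq> {0<..}" using a by (auto simp: K_def intro: less_le_trans[of 0 "a * exp (-1)"])
  have "uniformly_continuous_on K h"
    by (rule compact_uniformly_continuous) (use hc KS in \<open>auto simp: K_def elim: continuous_on_subset\<close>)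
  then obtain d where d: "d > 0" and dK: "\<And>x x'. x \<in> K \<Longrightarrow> x' \<in> K \<Longrightarrow> dist x' x < d \<Longrightarrow> dist (h x') (h x) < \<eta>"
    unfolding uniformly_continuous_on_def using eta by metis
  have b: "b > 0" using a ab by simp
  have l1: "((\<lambda>e. exp e) \<longlongrightarrow> 1) (at_right (0::real))"
    using tendsto_exp[OF tendsto_ident_at[of 0 "{0<..}"]] by simp
  have l2: "((\<lambda>e. exp (- e)) \<longlongrightarrow> 1) (at_right (0::real))"
    using tendsto_exp[OF tendsto_minus[OF tendsto_ident_at[of 0 "{0<..}"]]] by simp
  have ev0: "eventually (\<lambda>e. 0 < e \<and> e < (1::real)) (at_right 0)"
    unfolding eventually_at_right_field by (intro exI[of _ 1]) auto
  have db: "d / b > 0" using d b by simp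
  show "\<forall>\<^sub>F e in at_right 0. \<forall>t\<in>{a..b}. dist (G e t) (h t) < \<eta>"
    using ev0 tendstoD[OF l1 db] tendstoD[OF l2 db]
  proof eventually_elim
    case (elim e)
    then have e: "0 < e" "e < 1" and d1: "\<bar>exp e - 1\<bar> < d / b" and d2: "\<bar>exp (- e) - 1\<bar> < d / b"
      by (auto simp: dist_real_def)
    show ?case
    proof
      fix t assume t: "t \<in> {a..b}"
      have tp: "t > 0" using t a by auto
      have tK: "t \<in> K" unfolding K_def using t a
        by (auto intro!: mult_mono simp: mult_le_cancel_left1 mult_le_cancel_left2
            intro: order_trans[of _ a] order_trans[of _ b])
      have close: "dist (h (t * exp s)) (h t) < \<eta>" if s: "\<bar>s\<bar> < 1" and ds: "\<bar>exp s - 1\<bar> < d / b" for s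
      proof (rule dK[OF tK])
        have "exp (-1) \<le> exp s" "exp s \<le> exp 1" using s by auto
        then show "t * exp s \<in> K" unfolding K_def using t a
          by (auto intro!: mult_mono)
        have "t * exp s - t = t * (exp s - 1)" by (simp add: algebra_simps)
        then have "dist (t * exp s) t = t * \<bar>exp s - 1\<bar>"
          using tp by (simp add: dist_real_def abs_mult)
        also have "\<dots> \<le> b * \<bar>exp s - 1\<bar>" using t by (intro mult_right_mono) auto
        also have "\<dots> < b * (d / b)" using ds b by (intro mult_strict_left_mono) auto
        also have "\<dots> = d" using b by simp
        finally show "dist (t * exp s) t < d" .
      qed
      have c1: "dist (h (t * exp e)) (h t) < \<eta>" by (rule close) (use e d1 in auto)
      have c2: "dist (h (t * exp (- e))) (h t) < \<eta>" by (rule close) (use e d2 in auto)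
      have "h (t * exp (- e)) \<le> G e t \<and> G e t \<le> h (t * exp e)" using sw e tp by blast
      then show "dist (G e t) (h t) < \<eta>" using c1 c2 by (auto simp: dist_real_def)
    qed
  qed
qed

lemma main_convex:
  fixes \<phi> f :: "real \<Rightarrow> real"
  assumes phic: "continuous_on UNIV \<phi>" and nonneg: "\<And>t. \<phi> t \<ge> 0"
    and int1: "integral {-1..1} \<phi> = 1" and F: "F_convex_inc f"
  shows "(\<forall>\<epsilon>>0. F_convex_inc (regularize \<phi> \<epsilon> f)) \<and>
        (\<forall>a b. 0 < a \<longrightarrow> a \<le> b \<longrightarrow>
           uniform_limit {a..b} (\<lambda>\<epsilon>. conj_hat (regularize \<phi> \<epsilon> f)) (conj_hat f) (at_right 0))"
proof (intro conjI allI impI)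
  fix e :: real assume "e > 0"
  then show "F_convex_inc (regularize \<phi> e f)" by (rule reg_F_convex[OF phic nonneg int1 F])
next
  fix a b :: real assume a: "0 < a" and ab: "a \<le> b"
  have fm: "mono_on {0<..} f" and fcv: "convex_on {0<..} f"
    using F unfolding F_convex_inc_def by blast+
  have fc: "continuous_on {0<..} f" by (rule convex_on_continuous[OF open_greaterThan fcv])
  have bdd: "\<And>t. t > 0 \<Longrightarrow> bdd_above ((\<lambda>x. x * t - f x) ` {0<..})" by (rule hat_bdd[OF F])
  have hc: "continuous_on {0<..} (conj_hat f)"
    by (rule convex_on_continuous[OF open_greaterThan hat_convex[OF bdd]])
  show "uniform_limit {a..b} (\<lambda>\<epsilon>. conj_hat (regularize \<phi> \<epsilon> f)) (conj_hat f) (at_right 0)"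
  proof (rule unif_sandwich[OF hc _ a ab])
    fix e t :: real assume e: "e > 0" and t: "t > 0"
    have L: "\<And>x. 0 < x \<Longrightarrow> f (x * exp (- e)) \<le> regularize \<phi> e f x"
      by (rule reg_bounds(1)[OF phic nonneg int1 fc fm _ less_imp_le[OF e]])
    have U: "\<And>x. 0 < x \<Longrightarrow> regularize \<phi> e f x \<le> f (x * exp e)"
      by (rule reg_bounds(2)[OF phic nonneg int1 fc fm _ less_imp_le[OF e]])
    show "conj_hat f (t * exp (- e)) \<le> conj_hat (regularize \<phi> e f) t \<and> conj_hat (regularize \<phi> e f) t \<le> conj_hat f (t * exp e)"
      by (rule hat_sandwich[OF bdd L U t])
  qed
qed

lemma main_concave:
  fixes \<phi> f :: "real \<Rightarrow> real"
  assumes phic: "continuous_on UNIV \<phi>" and nonneg: "\<And>t. \<phi> t \<ge> 0"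
    and int1: "integral {-1..1} \<phi> = 1" and F: "F_concave_inc f"
  shows "(\<forall>\<epsilon>>0. F_concave_inc (regularize \<phi> \<epsilon> f)) \<and>
        (\<forall>a b. 0 < a \<longrightarrow> a \<le> b \<longrightarrow>
           uniform_limit {a..b} (\<lambda>\<epsilon>. conj_check (regularize \<phi> \<epsilon> f)) (conj_check f) (at_right 0))"
proof (intro conjI allI impI)
  fix e :: real assume "e > 0"
  then show "F_concave_inc (regularize \<phi> e f)" by (rule reg_F_concave[OF phic nonneg int1 F])
next
  fix a b :: real assume a: "0 < a" and ab: "a \<le> b"
  have fm: "mono_on {0<..} f" and fcv: "concave_on {0<..} f"
    using F unfolding F_concave_inc_def by blast+
  have ncv: "convex_on {0<..} (\<lambda>x. - f x)" using fcv unfolding concave_on_def .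
  have nc: "continuous_on {0<..} (\<lambda>x. - f x)"
    by (rule convex_on_continuous[OF open_greaterThan ncv])
  have fc: "continuous_on {0<..} f" using continuous_on_minus[OF nc] by (simp only: minus_minus)
  have bdd: "\<And>t. t > 0 \<Longrightarrow> bdd_below ((\<lambda>x. x * t - f x) ` {0<..})" by (rule check_bdd[OF F])
  have nhc: "continuous_on {0<..} (\<lambda>t. - conj_check f t)"
    by (rule convex_on_continuous[OF open_greaterThan check_concave[OF bdd]])
  have hc: "continuous_on {0<..} (conj_check f)"
    using continuous_on_minus[OF nhc] by (simp only: minus_minus)
  show "uniform_limit {a..b} (\<lambda>\<epsilon>. conj_check (regularize \<phi> \<epsilon> f)) (conj_check f) (at_right 0)"
  proof (rule unif_sandwich[OF hc _ a ab])
    fix e t :: real assume e: "e > 0" and t: "t > 0"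
    have L: "\<And>x. 0 < x \<Longrightarrow> f (x * exp (- e)) \<le> regularize \<phi> e f x"
      by (rule reg_bounds(1)[OF phic nonneg int1 fc fm _ less_imp_le[OF e]])
    have U: "\<And>x. 0 < x \<Longrightarrow> regularize \<phi> e f x \<le> f (x * exp e)"
      by (rule reg_bounds(2)[OF phic nonneg int1 fc fm _ less_imp_le[OF e]])
    show "conj_check f (t * exp (- e)) \<le> conj_check (regularize \<phi> e f) t \<and> conj_check (regularize \<phi> e f) t \<le> conj_check f (t * exp e)"
      by (rule check_sandwich[OF bdd L U t])
  qed
qed

theorem lemmaA3:
  fixes \<phi> :: "real \<Rightarrow> real"
  assumes smooth: "smooth_real \<phi>"
    and supp: "\<And>t. t \<notin> {-1..1} \<Longrightarrow> \<phi> t = 0"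
    and nonneg: "\<And>t. \<phi> t \<ge> 0"
    and int1: "integral {-1..1} \<phi> = 1"
  shows
    "(\<forall>f. F_convex_inc f \<longrightarrow>
        (\<forall>\<epsilon>>0. F_convex_inc (regularize \<phi> \<epsilon> f)) \<and>
        (\<forall>a b. 0 < a \<longrightarrow> a \<le> b \<longrightarrow>
           uniform_limit {a..b} (\<lambda>\<epsilon>. conj_hat (regularize \<phi> \<epsilon> f)) (conj_hat f) (at_right 0)))
     \<and>
     (\<forall>f. F_concave_inc f \<longrightarrow>
        (\<forall>\<epsilon>>0. F_concave_inc (regularize \<phi> \<epsilon> f)) \<and>
        (\<forall>a b. 0 < a \<longrightarrow> a \<le> b \<longrightarrow>
           uniform_limit {a..b} (\<lambda>\<epsilon>. conj_check (regularize \<phi> \<epsilon> f)) (conj_check f) (at_right 0)))"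
proof -
  have phic: "continuous_on UNIV \<phi>" by (rule phi_cont[OF smooth])
  show ?thesis
    using main_convex[OF phic nonneg int1] main_concave[OF phic nonneg int1] by blast
qed

end
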